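(* Let $k,\ell\in\mathbb Z_{\ge1}$ with $k\ne\ell$, and $\lambda_1,\lambda_2\in\mathbb C$. Then $\widetilde{\mathrm{Sol}}_{(k,\ell)}(-\lambda_1,-\lambda_2)\neq\{0\}$ if and only if $(\lambda_1,\lambda_2)\in\{(1-k,1-\ell+k),(1-k+\ell,1-\ell)\}$. Moreover $\widetilde{\mathrm{Sol}}_{(k,\ell)}(-(1-k),-(1-\ell+k))=\mathbb C\,p_+^{(k,\ell)}(t)$ and $\widetilde{\mathrm{Sol}}_{(k,\ell)}(-(1-k+\ell),-(1-\ell))=\mathbb C\,p_-^{(k,\ell)}(t)$.
   Context: Let $\vartheta_t=t\frac d{dt}$. For $a,b,\mu\in\mathbb C$ define $D^{(a,b)}(\mu;t)=\frac d{dt}+(\mu+a-\frac b2-1)(a-\vartheta_t)+\frac14t(a-1-\vartheta_t)(a-\vartheta_t)(b-\vartheta_t)$, and $D^{(a,b)}(\mu;-t)=-\frac d{dt}+(\mu+a-\frac b2-1)(a-\vartheta_t)-\frac14t(a-1-\vartheta_t)(a-\vartheta_t)(b-\vartheta_t)$ (substitution $t\mapsto -t$). For $k,\ell\in\mathbb Z_{\ge0}$, $\widetilde{\mathrm{Sol}}_{(k,\ell)}(-\lambda_1,-\lambda_2)=\{p\in\mathbb C[t]:\deg p\le\min(k,\ell),\ D^{(k,\ell)}(\lambda_1;t)p=0,\ D^{(\ell,k)}(\lambda_2;-t)p=0\}$. Polynomials: $p_\pm^{(k,\ell)}(t)=\sum_{m=0}^{\min(k,\ell)}\frac{(\pm1)^m}{2^m}m!\binom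 km\binom\ell m t^m$. *)

theory Defs
  imports Complex_Main "HOL-Computational_Algebra.Polynomial"
begin

definition theta :: "complex poly \<Rightarrow> complex poly" where
  "theta p = [:0, 1:] * pderiv p"

definition cmt :: "complex \<Rightarrow> complex poly \<Rightarrow> complex poly" where
  "cmt c p = smult c p - theta p"

definition Dplus :: "complex \<Rightarrow> complex \<Rightarrow> complex \<Rightarrow> complex poly \<Rightarrow> complex poly" where
  "Dplus a b mu p = pderiv p + smult (mu + a - b / 2 - 1) (cmt a p)
      + smult (1/4) ([:0, 1:] * cmt (a - 1) (cmt a (cmt b p)))"

text \<open>D^{(a,b)}(mu; -t) (substitution t |-> -t)\<close>
definition Dminus :: "complex \<Rightarrow> complex \<Rightarrow> complex \<Rightarrow> complex poly \<Rightarrow> complex poly" where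
  "Dminus a b mu p = - pderiv p + smult (mu + a - b / 2 - 1) (cmt a p)
      - smult (1/4) ([:0, 1:] * cmt (a - 1) (cmt a (cmt b p)))"

text \<open>SolTilde k l nu1 nu2 is the paper's Sol~_{(k,l)}(nu1,nu2); so
  Sol~_{(k,l)}(-lambda1,-lambda2) = SolTilde k l (-lambda1) (-lambda2) uses D^{(k,l)}(lambda1;t)
  and D^{(l,k)}(lambda2;-t).\<close>
definition SolTilde :: "nat \<Rightarrow> nat \<Rightarrow> complex \<Rightarrow> complex \<Rightarrow> complex poly set" where
  "SolTilde k l nu1 nu2 = {p. degree p \<le> min k l
      \<and> Dplus (of_nat k) (of_nat l) (- nu1) p = 0
      \<and> Dminus (of_nat l) (of_nat k) (- nu2) p = 0}"

definition p_pm :: "complex \<Rightarrow> nat \<Rightarrow> nat \<Rightarrow> complex poly" where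
  "p_pm s k l = (\<Sum>m\<le>min k l. monom (s ^ m / 2 ^ m * of_nat (fact m) * of_nat (k choose m)
                                     * of_nat (l choose m)) m)"

abbreviation "p_plus \<equiv> p_pm 1"
abbreviation "p_minus \<equiv> p_pm (-1)"

end

theory Submission
  imports Defs
begin

lemma choose_step: "Suc j * (k choose Suc j) = (k choose j) * (k - j)"
  by (metis binomial_absorb_comp binomial_absorption mult.commute)

lemma choose_step_c: "of_nat (Suc j) * of_nat (k choose Suc j) = of_nat (k choose j) * (of_nat k - of_nat j :: complex)"
proof (cases "j \<le> k")
  case True
  have "of_nat (Suc j * (k choose Suc j)) = (of_nat ((k choose j) * (k - j)) :: complex)"
    by (simp only: choose_step)
  then show ?thesis using True by (simp add: algebra_simps)
next
  case False
  then show ?thesis by (simp add: binomial_eq_0)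
qed

lemma coeff_X_mult: "coeff ([:0, 1:] * (q::complex poly)) m = (case m of 0 \<Rightarrow> 0 | Suc j \<Rightarrow> coeff q j)"
  by (cases m) simp_all

lemma coeff_theta: "coeff (theta p) m = of_nat m * coeff p m"
  unfolding theta_def by (cases m) (simp_all add: coeff_pderiv)

lemma coeff_cmt: "coeff (cmt c p) m = (c - of_nat m) * coeff p m"
  unfolding cmt_def by (simp add: coeff_theta algebra_simps)

lemma coeff_Dplus: "coeff (Dplus a b mu p) m = of_nat (Suc m) * coeff p (Suc m)
   + (mu+a-b/2-1)*((a - of_nat m)*coeff p m)
   + (case m of 0 \<Rightarrow> 0 | Suc j \<Rightarrow> (a - 1 - of_nat j)*((a - of_nat j)*((b - of_nat j)*coeff p j))/4)"
  unfolding Dplus_def coeff_add coeff_smult coeff_X_mult coeff_pderiv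
  by (cases m) (simp_all add: coeff_cmt)

lemma coeff_Dminus: "coeff (Dminus a b mu p) m = - (of_nat (Suc m) * coeff p (Suc m))
   + (mu+a-b/2-1)*((a - of_nat m)*coeff p m)
   - (case m of 0 \<Rightarrow> 0 | Suc j \<Rightarrow> (a - 1 - of_nat j)*((a - of_nat j)*((b - of_nat j)*coeff p j))/4)"
  unfolding Dminus_def coeff_add coeff_diff coeff_minus coeff_smult coeff_X_mult coeff_pderiv
  by (cases m) (simp_all add: coeff_cmt)

definition fq :: "complex \<Rightarrow> nat \<Rightarrow> nat \<Rightarrow> nat \<Rightarrow> complex" where
  "fq s k l m = s ^ m / 2 ^ m * of_nat (fact m) * of_nat (k choose m) * of_nat (l choose m)"

lemma coeff_p_pm: "coeff (p_pm s k l) i = fq s k l i"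
proof -
  have "coeff (p_pm s k l) i = (\<Sum>m\<le>min k l. if m = i then fq s k l m else 0)"
    unfolding p_pm_def fq_def by (simp add: coeff_sum coeff_monom)
  also have "\<dots> = fq s k l i"
    by (cases "i \<le> min k l") (auto simp: fq_def)
  finally show ?thesis .
qed

lemma fq_rec: "of_nat (Suc j) * fq s k l (Suc j) = s/2 * (of_nat k - of_nat j) * (of_nat l - of_nat j) * fq s k l j"
proof -
  have "of_nat (Suc j) * fq s k l (Suc j) = s^(Suc j)/2^(Suc j) * of_nat (fact j) * (of_nat (Suc j) * of_nat (k choose Suc j)) * (of_nat (Suc j) * of_nat (l choose Suc j))"
    unfolding fq_def fact_Suc of_nat_mult by (simp only: of_nat_id mult_ac times_divide_eq_left times_divide_eq_right)
  also have "\<dots> = s^(Suc j)/2^(Suc j) * of_nat (fact j) * (of_nat (k choose j) * (of_nat k - of_nat j)) * (of_nat (l choose j) * (of_nat l - of_nat j))"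
    unfolding choose_step_c by (simp del: of_nat_Suc)
  also have "\<dots> = s/2 * (of_nat k - of_nat j) * (of_nat l - of_nat j) * fq s k l j"
    unfolding fq_def by (simp add: field_simps)
  finally show ?thesis .
qed

lemma fq_0[simp]: "fq s k l 0 = 1"
  by (simp add: fq_def)

lemma suff:
  fixes s :: complex and k l :: nat
  assumes s2: "s^2 = 1"
  defines "K \<equiv> (of_nat k :: complex)" and "L \<equiv> (of_nat l :: complex)"
  shows "p_pm s k l \<in> SolTilde k l (-(1 - K + (1-s)/2*L)) (-(1 - L + (1+s)/2*K))"
proof -
  define c where "c = fq s k l"
  define q where "q = s/2"
  have q2: "q^2 = 1/4" using s2 unfolding q_def by (simp add: power_divide)
  have R: "of_nat (Suc j) * c (Suc j) = q * (K - of_nat j) * (L - of_nat j) * c j" for j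
    unfolding c_def q_def K_def L_def by (rule fq_rec)
  have deg: "degree (p_pm s k l) \<le> min k l"
  proof (rule degree_le, intro allI impI)
    fix i assume "min k l < i"
    then show "coeff (p_pm s k l) i = 0" by (auto simp: coeff_p_pm fq_def)
  qed
  have c0: "c 0 = 1" unfolding c_def by simp
  have c1: "c 1 = q * K * L" using R[of 0] c0 by simp
  have key: "(K - of_nat j) * ((L - of_nat j) * c j) / 4 = q * (of_nat (Suc j) * c (Suc j))" for j
  proof -
    have "(K - of_nat j) * ((L - of_nat j) * c j) / 4 = q^2 * ((K - of_nat j) * (L - of_nat j) * c j)"
      by (simp add: q2)
    also have "\<dots> = q * (q * (K - of_nat j) * (L - of_nat j) * c j)" by (simp add: power2_eq_square)
    also have "\<dots> = q * (of_nat (Suc j) * c (Suc j))" by (simp only: R)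
    finally show ?thesis .
  qed
  have key2: "(L - of_nat j) * ((K - of_nat j) * c j) / 4 = q * (of_nat (Suc j) * c (Suc j))" for j
    using key[of j] by (simp add: field_simps)
  have Pm: "coeff (Dplus K L (1 - K + (1-s)/2*L) (p_pm s k l)) m = 0" for m
  proof (cases m)
    case 0
    then show ?thesis unfolding coeff_Dplus coeff_p_pm c_def[symmetric]
      using c0 c1 by (simp add: q_def field_simps)
  next
    case (Suc j)
    have e: "(K - 1 - of_nat j) * ((K - of_nat j) * ((L - of_nat j) * c j)) / 4
       = (K - 1 - of_nat j) * (q * (of_nat (Suc j) * c (Suc j)))"
      using key[of j] by (simp add: field_simps)
    show ?thesis unfolding coeff_Dplus coeff_p_pm c_def[symmetric] Suc nat.case e R[of "Suc j"]
      by (simp add: q_def field_simps)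
  qed
  have Mm: "coeff (Dminus L K (1 - L + (1+s)/2*K) (p_pm s k l)) m = 0" for m
  proof (cases m)
    case 0
    then show ?thesis unfolding coeff_Dminus coeff_p_pm c_def[symmetric]
      using c0 c1 by (simp add: q_def field_simps)
  next
    case (Suc j)
    have e: "(L - 1 - of_nat j) * ((L - of_nat j) * ((K - of_nat j) * c j)) / 4
       = (L - 1 - of_nat j) * (q * (of_nat (Suc j) * c (Suc j)))"
      using key2[of j] by (simp add: field_simps)
    show ?thesis unfolding coeff_Dminus coeff_p_pm c_def[symmetric] Suc nat.case e R[of "Suc j"]
      by (simp add: q_def field_simps)
  qed
  have DP: "Dplus K L (1 - K + (1-s)/2*L) (p_pm s k l) = 0"
    by (rule poly_eqI) (simp only: Pm coeff_0)
  have DM: "Dminus L K (1 - L + (1+s)/2*K) (p_pm s k l) = 0"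
    by (rule poly_eqI) (simp only: Mm coeff_0)
  show ?thesis unfolding SolTilde_def minus_minus K_def[symmetric] L_def[symmetric]
    using deg DP DM by blast
qed

lemma nec:
  fixes k l :: nat and la1 la2 :: complex
  assumes kl: "k \<ge> 1" "l \<ge> 1" "k \<noteq> l"
    and pS: "p \<in> SolTilde k l (-la1) (-la2)" and pnz: "p \<noteq> 0"
  defines "K \<equiv> (of_nat k :: complex)" and "L \<equiv> (of_nat l :: complex)"
  shows "\<exists>s. s^2 = 1 \<and> la1 = 1 - K + (1-s)/2*L \<and> la2 = 1 - L + (1+s)/2*K
           \<and> p = smult (coeff p 0) (p_pm s k l)"
proof -
  define c where "c = coeff p"
  define A where "A = la1 + K - L/2 - 1"
  define B where "B = la2 + L - K/2 - 1"
  have K0: "K \<noteq> 0" and L0: "L \<noteq> 0" and KL: "K - L \<noteq> 0"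
    using kl by (auto simp: K_def L_def)
  have DP: "Dplus K L la1 p = 0" and DM: "Dminus L K la2 p = 0"
    using pS by (simp_all add: SolTilde_def K_def L_def)
  have P: "of_nat (Suc m) * c (Suc m) + A * ((K - of_nat m) * c m)
     + (case m of 0 \<Rightarrow> 0 | Suc j \<Rightarrow> (K - 1 - of_nat j)*((K - of_nat j)*((L - of_nat j)*c j))/4) = 0" for m
    using arg_cong[OF DP, of "\<lambda>r. coeff r m"] unfolding coeff_Dplus c_def A_def by simp
  have M: "- (of_nat (Suc m) * c (Suc m)) + B * ((L - of_nat m) * c m)
     - (case m of 0 \<Rightarrow> 0 | Suc j \<Rightarrow> (L - 1 - of_nat j)*((L - of_nat j)*((K - of_nat j)*c j))/4) = 0" for m
    using arg_cong[OF DM, of "\<lambda>r. coeff r m"] unfolding coeff_Dminus c_def B_def by simp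
  have P0: "c 1 + A * (K * c 0) = 0" using P[of 0] by simp
  have M0: "- c 1 + B * (L * c 0) = 0" using M[of 0] by simp
  have PS: "of_nat (Suc (Suc j)) * c (Suc (Suc j)) + A * ((K - of_nat (Suc j)) * c (Suc j))
     + (K - 1 - of_nat j)*((K - of_nat j)*((L - of_nat j)*c j))/4 = 0" for j
    using P[of "Suc j"] by simp
  have MS: "- (of_nat (Suc (Suc j)) * c (Suc (Suc j))) + B * ((L - of_nat (Suc j)) * c (Suc j))
     - (L - 1 - of_nat j)*((L - of_nat j)*((K - of_nat j)*c j))/4 = 0" for j
    using M[of "Suc j"] by simp
  have c0: "c 0 \<noteq> 0"
  proof
    assume c00: "c 0 = 0"
    have "c m = 0 \<and> c (Suc m) = 0" for m
    proof (induction m)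
      case 0
      then show ?case using P0 c00 by simp
    next
      case (Suc m)
      then have "of_nat (Suc (Suc m)) * c (Suc (Suc m)) = 0" using PS[of m] by simp
      then show ?case using Suc by (simp del: of_nat_Suc)
    qed
    then have "p = 0" by (intro poly_eqI) (simp add: c_def)
    then show False using pnz by simp
  qed
  have S0: "A * K + B * L = 0"
  proof -
    have "(A * K + B * L) * c 0 = (c 1 + A * (K * c 0)) + (- c 1 + B * (L * c 0))"
      by (simp add: algebra_simps)
    also have "\<dots> = 0" unfolding P0 M0 by simp
    finally show ?thesis using c0 by simp
  qed
  have Rec0: "of_nat (Suc j) * (A + B) * c (Suc j) = (K - L) * (K - of_nat j) * (L - of_nat j) / 4 * c j" for j
  proof -
    have "of_nat (Suc j) * (A + B) * c (Suc j) - (K - L) * (K - of_nat j) * (L - of_nat j) / 4 * c j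
       = (A * K + B * L) * c (Suc j)
         - ((of_nat (Suc (Suc j)) * c (Suc (Suc j)) + A * ((K - of_nat (Suc j)) * c (Suc j))
     + (K - 1 - of_nat j)*((K - of_nat j)*((L - of_nat j)*c j))/4)
         + (- (of_nat (Suc (Suc j)) * c (Suc (Suc j))) + B * ((L - of_nat (Suc j)) * c (Suc j))
     - (L - 1 - of_nat j)*((L - of_nat j)*((K - of_nat j)*c j))/4))"
      by (simp add: field_simps)
    also have "\<dots> = 0" using S0 PS[of j] MS[of j] by simp
    finally show ?thesis by simp
  qed
  have AB: "A + B \<noteq> 0"
  proof
    assume "A + B = 0"
    then have "(K - L) * K * L / 4 * c 0 = 0" using Rec0[of 0] by simp
    then show False using K0 L0 KL c0 by simp
  qed
  define q where "q = (K - L) / (4 * (A + B))"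
  have R: "of_nat (Suc j) * c (Suc j) = q * (K - of_nat j) * (L - of_nat j) * c j" for j
  proof -
    have qAB: "(A + B) * q = (K - L) / 4" unfolding q_def using AB
      by (metis mult.commute nonzero_mult_divide_mult_cancel_left times_divide_eq_right)
    have "(A + B) * (of_nat (Suc j) * c (Suc j)) = of_nat (Suc j) * (A + B) * c (Suc j)"
      by (simp only: mult_ac)
    also have "\<dots> = (K - L) / 4 * ((K - of_nat j) * (L - of_nat j) * c j)"
      unfolding Rec0 by simp
    also have "\<dots> = ((A + B) * q) * ((K - of_nat j) * (L - of_nat j) * c j)"
      unfolding qAB ..
    also have "\<dots> = (A + B) * (q * (K - of_nat j) * (L - of_nat j) * c j)"
      by (simp only: mult_ac)
    finally have "(A + B) * (of_nat (Suc j) * c (Suc j)) = (A + B) * (q * (K - of_nat j) * (L - of_nat j) * c j)" .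
    then show ?thesis using AB by simp
  qed
  have c1: "c 1 = q * K * L * c 0" using R[of 0] by simp
  have Aq: "A = - q * L"
  proof -
    have "(A + q * L) * (K * c 0) = 0" using P0 c1 by (simp add: algebra_simps)
    then have h: "A + q * L = 0" using K0 c0 by simp
    have "A = (A + q * L) - q * L" by simp
    also have "\<dots> = - q * L" unfolding h by simp
    finally show ?thesis .
  qed
  have Bq: "B = q * K"
  proof -
    have "(B - q * K) * L = 0" using S0 Aq by (simp add: algebra_simps)
    then show ?thesis using L0 by simp
  qed
  have AB4: "4 * (A + B) \<noteq> 0" using AB by (metis mult_eq_0_iff zero_neq_numeral)
  have "q * (4 * (A + B)) = K - L" using q_def AB4 by (simp add: nonzero_eq_divide_eq)
  then have "(4 * q^2 - 1) * (K - L) = 0" unfolding Aq Bq by (simp add: algebra_simps power2_eq_square)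
  then have q2: "4 * q^2 = 1" using KL by simp
  define s where "s = 2 * q"
  have s2: "s^2 = 1" using q2 by (simp add: s_def power_mult_distrib)
  have la1: "la1 = 1 - K + (1-s)/2*L" using A_def Aq s_def by (simp add: field_simps)
  have la2: "la2 = 1 - L + (1+s)/2*K" using B_def Bq s_def by (simp add: field_simps)
  have cf: "c m = c 0 * fq s k l m" for m
  proof (induction m)
    case 0 then show ?case by simp
  next
    case (Suc m)
    have "of_nat (Suc m) * c (Suc m) = of_nat (Suc m) * (c 0 * fq s k l (Suc m))"
      using R[of m] fq_rec[of m s k l] Suc unfolding s_def K_def L_def by simp
    then show ?case by (simp del: of_nat_Suc)
  qed
  have "p = smult (coeff p 0) (p_pm s k l)"
  proof (rule poly_eqI)
    fix n
    show "coeff p n = coeff (smult (coeff p 0) (p_pm s k l)) n"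
      unfolding coeff_smult coeff_p_pm using cf[of n] unfolding c_def .
  qed
  then show ?thesis using s2 la1 la2 by blast
qed

lemma sol_smult:
  assumes "p \<in> SolTilde k l a b"
  shows "smult c p \<in> SolTilde k l a b"
proof -
  have d: "degree (smult c p) \<le> min k l"
    using assms degree_smult_le[of c p] unfolding SolTilde_def by auto
  have "Dplus x y z (smult c p) = smult c (Dplus x y z p)" for x y z
    by (rule poly_eqI) (simp add: coeff_Dplus algebra_simps split: nat.split)
  moreover have "Dminus x y z (smult c p) = smult c (Dminus x y z p)" for x y z
    by (rule poly_eqI) (simp add: coeff_Dminus algebra_simps split: nat.split)
  ultimately show ?thesis using assms d unfolding SolTilde_def by simp
qed

lemma zero_sol: "0 \<in> SolTilde k l a b"
proof -
  have "Dplus x y z 0 = 0" for x y z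
    by (rule poly_eqI) (simp add: coeff_Dplus split: nat.split)
  moreover have "Dminus x y z 0 = 0" for x y z
    by (rule poly_eqI) (simp add: coeff_Dminus split: nat.split)
  ultimately show ?thesis unfolding SolTilde_def by simp
qed

lemma p_pm_nz: "p_pm s k l \<noteq> 0"
proof
  assume "p_pm s k l = 0"
  then have "coeff (p_pm s k l) 0 = 0" by simp
  then show False by (simp add: coeff_p_pm)
qed

theorem proposition6p3:
  fixes k l :: nat and la1 la2 :: complex
  assumes "k \<ge> 1" and "l \<ge> 1" and "k \<noteq> l"
  shows "(SolTilde k l (-la1) (-la2) \<noteq> {0} \<longleftrightarrow>
            (la1, la2) \<in> {(1 - of_nat k, 1 - of_nat l + of_nat k), (1 - of_nat k + of_nat l, 1 - of_nat l)})
    \<and> SolTilde k l (-(1 - of_nat k)) (-(1 - of_nat l + of_nat k)) = range (\<lambda>c. smult c (p_plus k l))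
    \<and> SolTilde k l (-(1 - of_nat k + of_nat l)) (-(1 - of_nat l)) = range (\<lambda>c. smult c (p_minus k l))"
proof -
  define K where "K = (of_nat k :: complex)"
  define L where "L = (of_nat l :: complex)"
  have L0: "L \<noteq> 0" using assms by (simp add: L_def)
  have s1: "p_plus k l \<in> SolTilde k l (-(1 - K)) (-(1 - L + K))"
  proof -
    have "1 - K + (1-1)/2*L = 1 - K" "1 - L + (1+1)/2*K = 1 - L + K" by simp_all
    then show ?thesis using suff[of 1 k l] unfolding K_def L_def by simp
  qed
  have s2: "p_minus k l \<in> SolTilde k l (-(1 - K + L)) (-(1 - L))"
  proof -
    have "1 - K + (1-(-1))/2*L = 1 - K + L" "1 - L + (1+(-1))/2*K = 1 - L" by simp_all
    then show ?thesis using suff[of "-1" k l] unfolding K_def L_def by simp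
  qed
  have sq: "s = 1 \<or> s = -1" if "s^2 = (1::complex)" for s
    using that by (metis power2_eq_1_iff)
  have part1: "SolTilde k l (-la1) (-la2) \<noteq> {0} \<longleftrightarrow>
            (la1, la2) \<in> {(1 - K, 1 - L + K), (1 - K + L, 1 - L)}"
  proof
    assume "SolTilde k l (-la1) (-la2) \<noteq> {0}"
    then obtain p where p: "p \<in> SolTilde k l (-la1) (-la2)" "p \<noteq> 0"
      using zero_sol[of k l "-la1" "-la2"] by blast
    from nec[OF assms p] obtain s where
      s: "s^2 = 1" "la1 = 1 - K + (1-s)/2*L" "la2 = 1 - L + (1+s)/2*K"
      unfolding K_def L_def by blast
    from sq[OF s(1)] show "(la1, la2) \<in> {(1 - K, 1 - L + K), (1 - K + L, 1 - L)}"
      using s by auto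
  next
    assume "(la1, la2) \<in> {(1 - K, 1 - L + K), (1 - K + L, 1 - L)}"
    then show "SolTilde k l (-la1) (-la2) \<noteq> {0}"
      using s1 s2 p_pm_nz by auto
  qed
  have part2: "SolTilde k l (-(1 - K)) (-(1 - L + K)) = range (\<lambda>c. smult c (p_plus k l))"
  proof
    show "range (\<lambda>c. smult c (p_plus k l)) \<subseteq> SolTilde k l (-(1 - K)) (-(1 - L + K))"
      using sol_smult[OF s1] by auto
  next
    show "SolTilde k l (-(1 - K)) (-(1 - L + K)) \<subseteq> range (\<lambda>c. smult c (p_plus k l))"
    proof
      fix p assume p: "p \<in> SolTilde k l (-(1 - K)) (-(1 - L + K))"
      show "p \<in> range (\<lambda>c. smult c (p_plus k l))"
      proof (cases "p = 0")
        case True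
        then show ?thesis by (intro range_eqI[of _ _ 0]) simp
      next
        case False
        from nec[OF assms p[unfolded K_def L_def] False] obtain s where
          s: "s^2 = 1" "1 - K = 1 - K + (1-s)/2*L" "p = smult (coeff p 0) (p_pm s k l)"
          unfolding K_def L_def by blast
        have "s = 1" using s(2) L0 by simp
        then show ?thesis using s(3) by blast
      qed
    qed
  qed
  have part3: "SolTilde k l (-(1 - K + L)) (-(1 - L)) = range (\<lambda>c. smult c (p_minus k l))"
  proof
    show "range (\<lambda>c. smult c (p_minus k l)) \<subseteq> SolTilde k l (-(1 - K + L)) (-(1 - L))"
      using sol_smult[OF s2] by auto
  next
    show "SolTilde k l (-(1 - K + L)) (-(1 - L)) \<subseteq> range (\<lambda>c. smult c (p_minus k l))"
    proof
      fix p assume p: "p \<in> SolTilde k l (-(1 - K + L)) (-(1 - L))"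
      show "p \<in> range (\<lambda>c. smult c (p_minus k l))"
      proof (cases "p = 0")
        case True
        then show ?thesis by (intro range_eqI[of _ _ 0]) simp
      next
        case False
        from nec[OF assms p[unfolded K_def L_def] False] obtain s where
          s: "s^2 = 1" "1 - K + L = 1 - K + (1-s)/2*L" "p = smult (coeff p 0) (p_pm s k l)"
          unfolding K_def L_def by blast
        have "(1 - s)/2 = 1" using s(2) L0 by simp
        then have "1 - s = 2" by (simp add: field_simps)
        then have "s = -1" by (simp add: algebra_simps eq_neg_iff_add_eq_0)
        then show ?thesis using s(3) by blast
      qed
    qed
  qed
  show ?thesis using part1 part2 part3 unfolding K_def L_def by blast
qed

end
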